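(* The measure space \((\mathbb{R}^{\mathbb{N}},\mu)\) is not semi-finite.
   Context: Let $\mathcal{B}$ be the Borel $\sigma$-algebra of $\mathbb{R}$, $\lambda$ the Lebesgue measure, and $\mathcal{B}_{\infty}$ the $\sigma$-algebra on $\mathbb{R}^{\mathbb{N}}$ generated by the cylinder sets $\prod_{i=1}^{m}C_{i}\times\prod_{i=m+1}^{\infty}\mathbb{R}$ with $C_i\in\mathcal{B}$, $m\in\mathbb{N}$. Let $\mathcal{F}(\mathcal{B},\lambda)$ be the set of finite rectangles $\prod_{i\in\mathbb{N}}C_{i}$ with $C_i\in\mathcal{B}$ and $\prod_{i}\lambda(C_i)\in[0,\infty)$, with $\mathrm{vol}(\prod_{i}C_i):=\prod_i\lambda(C_i)$. The measure $\mu$ is the restriction to $\mathcal{B}_{\infty}$ of the outer measure $\mu^{\ast}(A):=\inf\{\sum_{n}\mathrm{vol}(\mathscr{C}_{n}) : \mathscr{C}_{n}\in\mathcal{F}(\mathcal{B},\lambda),\ A\subset\bigcup_{n}\mathscr{C}_{n}\}$ ($\inf\varnothing=\infty$). *)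

theory Defs
  imports "HOL-Analysis.Analysis"
begin

text \<open>Points of R^N are sequences nat => real (coordinates indexed from 0).\<close>

definition cylinder_sets :: "(nat \<Rightarrow> real) set set" where
  "cylinder_sets = {{x. \<forall>i<m. x i \<in> C i} | (m::nat) (C::nat \<Rightarrow> real set).
                      \<forall>i<m. C i \<in> sets borel}"

definition B_inf :: "(nat \<Rightarrow> real) set set" where
  "B_inf = sigma_sets UNIV cylinder_sets"

definition rect :: "(nat \<Rightarrow> real set) \<Rightarrow> (nat \<Rightarrow> real) set" where
  "rect C = {x. \<forall>i. x i \<in> C i}"

text \<open>The infinite product prod_i lambda(C_i), as the limit of the partial products
  (in [0,infinity], with 0 * infinity = 0).\<close>
definition has_vol :: "(nat \<Rightarrow> real set) \<Rightarrow> ennreal \<Rightarrow> bool" where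
  "has_vol C v \<longleftrightarrow> (\<lambda>n. \<Prod>i<n. emeasure lborel (C i)) \<longlonglongrightarrow> v"

definition finite_rect :: "(nat \<Rightarrow> real set) \<Rightarrow> bool" where
  "finite_rect C \<longleftrightarrow> (\<forall>i. C i \<in> sets borel) \<and> (\<exists>v. has_vol C v \<and> v < \<infinity>)"

definition vol :: "(nat \<Rightarrow> real set) \<Rightarrow> ennreal" where
  "vol C = lim (\<lambda>n. \<Prod>i<n. emeasure lborel (C i))"

definition mu_star :: "(nat \<Rightarrow> real) set \<Rightarrow> ennreal" where
  "mu_star A = Inf {(\<Sum>n. vol (\<C> n)) | \<C>. (\<forall>n. finite_rect (\<C> n)) \<and> A \<subseteq> (\<Union>n. rect (\<C> n))}"

text \<open>mu is the restriction of mu_star to B_inf.\<close>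
definition mu :: "(nat \<Rightarrow> real) set \<Rightarrow> ennreal" where
  "mu A = mu_star A"

definition semifinite :: "'a set set \<Rightarrow> ('a set \<Rightarrow> ennreal) \<Rightarrow> bool" where
  "semifinite S m \<longleftrightarrow> (\<forall>A\<in>S. m A = \<infinity> \<longrightarrow> (\<exists>B\<in>S. B \<subseteq> A \<and> 0 < m B \<and> m B < \<infinity>))"

end

theory Submission imports Defs begin


lemma growth_contra:
  fixes dr :: "nat \<Rightarrow> real"
  assumes pos: "\<And>i. dr i > 0"
    and lim: "(\<lambda>n. \<Prod>i<n. dr i) \<longlonglongrightarrow> vr"
    and gr: "\<And>i. i \<ge> N \<Longrightarrow> dr i * dr (Suc i) \<ge> 2"
  shows False
proof -
  define P where "P n = (\<Prod>i<n. dr i)" for n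
  have Ppos: "P n > 0" for n unfolding P_def using pos by (simp add: prod_pos)
  have grow: "P (N + 2*j) \<ge> 2^j * P N" for j
  proof (induction j)
    case 0 then show ?case by simp
  next
    case (Suc j)
    have "P (N + 2 * Suc j) = P (N + 2*j) * (dr (N+2*j) * dr (Suc (N+2*j)))"
      unfolding P_def by (simp add: mult.assoc)
    also have "\<dots> \<ge> P (N + 2*j) * 2"
      using gr[of "N+2*j"] Ppos[of "N+2*j"] by (intro mult_left_mono) auto
    finally show ?case using Suc Ppos[of N] by simp
  qed
  have sub: "(\<lambda>j. P (N + 2*j)) \<longlonglongrightarrow> vr"
  proof -
    have "strict_mono (\<lambda>j::nat. N + 2*j)" by (auto simp: strict_mono_def)
    from LIMSEQ_subseq_LIMSEQ[OF lim[folded P_def[abs_def]] this] show ?thesis by (simp add: o_def)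
  qed
  have bound: "vr \<ge> 2^j * P N" for j
  proof (rule LIMSEQ_le_const[OF sub])
    show "\<exists>M. \<forall>n\<ge>M. 2 ^ j * P N \<le> P (N + 2 * n)"
    proof (intro exI allI impI)
      fix n assume "j \<le> n"
      have "(2::real)^j \<le> 2^n" using \<open>j \<le> n\<close> by (simp add: power_increasing)
      hence "2^j * P N \<le> 2^n * P N" using Ppos[of N] by (intro mult_right_mono) auto
      also have "\<dots> \<le> P (N + 2*n)" by (rule grow)
      finally show "2 ^ j * P N \<le> P (N + 2 * n)" .
    qed
  qed
  obtain j where "vr / P N < 2^j" using real_arch_pow[of 2 "vr / P N"] by auto
  hence "vr < 2^j * P N" using Ppos[of N] by (simp add: divide_less_eq)
  with bound[of j] show False by simp
qed

lemma shrink_zero: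
  fixes dr er :: "nat \<Rightarrow> real"
  assumes pos: "\<And>i. er i > 0" and le: "\<And>i. er i \<le> dr i"
    and half: "\<And>i. even i \<Longrightarrow> er i \<le> 1/2"
    and lim: "(\<lambda>n. \<Prod>i<n. dr i) \<longlonglongrightarrow> vr"
  shows "(\<lambda>n. \<Prod>i<n. er i) \<longlonglongrightarrow> 0"
proof -
  define P where "P n = (\<Prod>i<n. dr i)" for n
  define Q where "Q n = (\<Prod>i<n. er i)" for n
  have dpos: "dr i > 0" for i using pos[of i] le[of i] by linarith
  have Ppos: "P n > 0" for n unfolding P_def using dpos by (simp add: prod_pos)
  have Qpos: "Q n > 0" for n unfolding Q_def using pos by (simp add: prod_pos)
  have QP: "Q n \<le> P n" for n unfolding P_def Q_def
    using pos le by (intro prod_mono) (auto intro: less_imp_le)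
  have limP: "P \<longlonglongrightarrow> vr" using lim unfolding P_def[abs_def] .
  have vr0: "vr \<ge> 0" using Ppos by (intro LIMSEQ_le_const[OF limP]) (auto intro: less_imp_le)
  show ?thesis
  proof (cases "vr = 0")
    case True
    show ?thesis unfolding Q_def[symmetric, abs_def]
    proof (rule real_tendsto_sandwich[of "\<lambda>_. 0" _ _ P])
      show "\<forall>\<^sub>F n in sequentially. 0 \<le> Q n" using Qpos by (simp add: less_imp_le)
      show "\<forall>\<^sub>F n in sequentially. Q n \<le> P n" using QP by simp
    qed (use limP True in auto)
  next
    case False
    hence vpos: "vr > 0" using vr0 by simp
    have "(\<lambda>k. P (Suc k) / P k) \<longlonglongrightarrow> vr / vr"
      by (intro tendsto_divide) (use limP LIMSEQ_Suc[OF limP] vpos in auto)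
    moreover have "P (Suc k) / P k = dr k" for k
      unfolding P_def using dpos[of k] by (simp add: prod_pos dpos less_imp_neq[symmetric])
    ultimately have "dr \<longlonglongrightarrow> 1" using vpos by simp
    hence "eventually (\<lambda>k. dr k > 3/4) sequentially"
      by (rule order_tendstoD) simp
    then obtain K where K: "\<And>k. k \<ge> K \<Longrightarrow> dr k > 3/4" by (auto simp: eventually_sequentially)
    define s where "s n = Q n / P n" for n
    have sSuc: "s (Suc n) = s n * (er n / dr n)" for n
      unfolding s_def P_def Q_def by simp
    have rle1: "er n / dr n \<le> 1" for n using le[of n] dpos[of n] by simp
    have rpos: "er n / dr n > 0" for n using pos[of n] dpos[of n] by simp
    have spos: "s n > 0" for n unfolding s_def using Qpos Ppos by simp
    have dec: "decseq s"
    proof (rule decseq_SucI)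
      fix n
      have "s n * (er n / dr n) \<le> s n" using rle1[of n] spos[of n] by (intro mult_left_le) auto
      thus "s (Suc n) \<le> s n" by (simp only: sSuc)
    qed
    have r23: "er n / dr n \<le> 2/3" if "n \<ge> K" "even n" for n
    proof -
      have "er n \<le> 1/2" using half that by simp
      also have "1/2 \<le> (2/3) * dr n" using K[of n] that by simp
      finally show ?thesis using dpos[of n] by (simp add: divide_le_eq)
    qed
    have s2: "s (Suc (Suc n)) \<le> (2/3) * s n" if "n \<ge> K" for n
    proof -
      have eq: "s (Suc (Suc n)) = s n * ((er n / dr n) * (er (Suc n) / dr (Suc n)))"
        by (simp add: sSuc mult.assoc)
      have "(er n / dr n) * (er (Suc n) / dr (Suc n)) \<le> 2/3"
      proof (cases "even n")
        case True
        have "(er n / dr n) * (er (Suc n) / dr (Suc n)) \<le> (2/3) * 1"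
          by (intro mult_mono r23 rle1) (use that True rpos in \<open>auto intro: less_imp_le\<close>)
        thus ?thesis by simp
      next
        case False
        have "(er n / dr n) * (er (Suc n) / dr (Suc n)) \<le> 1 * (2/3)"
          by (intro mult_mono r23 rle1) (use that False rpos in \<open>auto intro: less_imp_le\<close>)
        thus ?thesis by simp
      qed
      hence "s n * ((er n / dr n) * (er (Suc n) / dr (Suc n))) \<le> s n * (2/3)"
        using spos[of n] by (intro mult_left_mono) auto
      thus ?thesis unfolding eq by (simp only: mult.commute)
    qed
    obtain L where L: "s \<longlonglongrightarrow> L" "\<forall>i. L \<le> s i"
      using decseq_convergent[OF dec, of 0] spos by (auto intro: less_imp_le)
    have L0: "L \<ge> 0" using spos by (intro LIMSEQ_le_const[OF L(1)]) (auto intro: less_imp_le)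
    have "L \<le> (2/3) * L"
    proof (rule LIMSEQ_le[of "\<lambda>n. s (Suc (Suc n))" _ "\<lambda>n. (2/3) * s n"])
      show "(\<lambda>n. s (Suc (Suc n))) \<longlonglongrightarrow> L" using L(1) by (intro LIMSEQ_Suc)
      show "(\<lambda>n. (2/3) * s n) \<longlonglongrightarrow> (2/3) * L" using L(1) by (intro tendsto_mult) auto
      show "\<exists>N. \<forall>n\<ge>N. s (Suc (Suc n)) \<le> 2 / 3 * s n" using s2 by blast
    qed
    hence "L = 0" using L0 by simp
    hence "(\<lambda>n. s n * P n) \<longlonglongrightarrow> 0 * vr" using L(1) limP by (intro tendsto_mult) auto
    moreover have "s n * P n = Q n" for n unfolding s_def using Ppos[of n] by simp
    ultimately show ?thesis unfolding Q_def[symmetric, abs_def] by simp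
  qed
qed


definition Cs :: "nat \<Rightarrow> real set" where
  "Cs i = (if even i then {0..1/2} else {0..4})"

definition cv :: "nat \<Rightarrow> real" where
  "cv i = (if even i then 1/2 else 4)"

lemma Cs_borel[measurable]: "Cs i \<in> sets borel"
  unfolding Cs_def by auto

lemma Cs_meas: "emeasure lborel (Cs i) = ennreal (cv i)"
  unfolding Cs_def cv_def by auto

lemma cv_pos: "cv i > 0" unfolding cv_def by auto

lemma cv_prod: "cv i * cv (Suc i) = 2" unfolding cv_def by auto

lemma fin_sides:
  fixes d :: "nat \<Rightarrow> ennreal"
  assumes lim: "(\<lambda>n. \<Prod>i<n. d i) \<longlonglongrightarrow> v" and vfin: "v < \<infinity>" and nz: "\<And>i. d i \<noteq> 0"
  shows "d j < \<infinity>"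
proof (rule ccontr)
  assume "\<not> d j < \<infinity>"
  hence dj: "d j = top" by (simp add: not_less top_unique)
  have "eventually (\<lambda>n. (\<Prod>i<n. d i) = top) sequentially"
    unfolding eventually_sequentially
  proof (intro exI allI impI)
    fix n assume "Suc j \<le> n"
    hence jn: "j \<in> {..<n}" by simp
    show "(\<Prod>i<n. d i) = top"
      by (rule ennreal_prod_eq_top[THEN iffD2]) (use nz dj jn in blast)
  qed
  hence "(\<lambda>n. \<Prod>i<n. d i) \<longlonglongrightarrow> top" by (rule tendsto_eventually)
  from LIMSEQ_unique[OF lim this] have "v = top" .
  with vfin show False by simp
qed


lemma to_real_prod:
  fixes d :: "nat \<Rightarrow> ennreal"
  assumes "\<And>i. d i < \<infinity>"
  shows "(\<Prod>i<n. d i) = ennreal (\<Prod>i<n. enn2real (d i))"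
proof -
  have "(\<Prod>i<n. d i) = (\<Prod>i<n. ennreal (enn2real (d i)))"
    using assms by (intro prod.cong) auto
  also have "\<dots> = ennreal (\<Prod>i<n. enn2real (d i))" by (rule prod_ennreal) simp
  finally show ?thesis .
qed

lemma vol_zero_inter:
  assumes "finite_rect D"
  shows "has_vol (\<lambda>i. D i \<inter> Cs i) 0"
proof -
  obtain v where hv: "has_vol D v" and vfin: "v < \<infinity>" and bor: "\<And>i. D i \<in> sets borel"
    using assms unfolding finite_rect_def by auto
  define d where "d i = emeasure lborel (D i)" for i
  define e where "e i = emeasure lborel (D i \<inter> Cs i)" for i
  have limd: "(\<lambda>n. \<Prod>i<n. d i) \<longlonglongrightarrow> v" using hv unfolding has_vol_def d_def .
  have ed: "e i \<le> d i" for i unfolding e_def d_def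
    by (rule emeasure_mono) (use bor in auto)
  have ec: "e i \<le> ennreal (cv i)" for i unfolding e_def Cs_meas[symmetric]
    by (rule emeasure_mono) auto
  show ?thesis unfolding has_vol_def e_def[symmetric]
  proof (cases "\<exists>j. e j = 0")
    case True
    then obtain j where j: "e j = 0" by auto
    have "eventually (\<lambda>n. (\<Prod>i<n. e i) = 0) sequentially"
      unfolding eventually_sequentially
    proof (intro exI allI impI)
      fix n assume "Suc j \<le> n"
      thus "(\<Prod>i<n. e i) = 0" using j by (intro prod_zero) auto
    qed
    thus "(\<lambda>n. \<Prod>i<n. e i) \<longlonglongrightarrow> 0" by (rule tendsto_eventually)
  next
    case False
    hence enz: "e i \<noteq> 0" for i by auto
    have dnz: "d i \<noteq> 0" for i using ed[of i] enz[of i] by (auto simp: le_zero_eq)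
    have dfin: "d i < \<infinity>" for i by (rule fin_sides[OF limd vfin dnz])
    have efin: "e i < \<infinity>" for i using ed[of i] dfin[of i] by (simp add: le_less_trans)
    define dr where "dr i = enn2real (d i)" for i
    define er where "er i = enn2real (e i)" for i
    have erpos: "er i > 0" for i unfolding er_def using enz[of i] efin[of i]
      by (simp add: enn2real_positive_iff zero_less_iff_neq_zero)
    have erle: "er i \<le> dr i" for i unfolding er_def dr_def using ed[of i] dfin[of i]
      by (intro enn2real_mono) auto
    have erhalf: "er i \<le> 1/2" if "even i" for i
    proof -
      have "er i \<le> enn2real (ennreal (cv i))" unfolding er_def using ec[of i]
        by (intro enn2real_mono) auto
      moreover have "enn2real (ennreal (cv i)) = cv i" using cv_pos[of i] by simp
      ultimately have "er i \<le> cv i" by (simp only:)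
      thus ?thesis using that by (simp add: cv_def)
    qed
    have vv: "v = ennreal (enn2real v)" using vfin by simp
    have "(\<lambda>n. ennreal (\<Prod>i<n. dr i)) \<longlonglongrightarrow> ennreal (enn2real v)"
      using limd unfolding dr_def to_real_prod[OF dfin] by (subst vv[symmetric])
    hence limr: "(\<lambda>n. \<Prod>i<n. dr i) \<longlonglongrightarrow> enn2real v"
      by (subst (asm) tendsto_ennreal_iff) (auto simp: dr_def prod_nonneg)
    have "(\<lambda>n. \<Prod>i<n. er i) \<longlonglongrightarrow> 0"
      by (rule shrink_zero[OF erpos erle erhalf limr])
    hence "(\<lambda>n. ennreal (\<Prod>i<n. er i)) \<longlonglongrightarrow> ennreal 0"
      by (intro tendsto_ennrealI)
    thus "(\<lambda>n. \<Prod>i<n. e i) \<longlonglongrightarrow> 0" unfolding er_def to_real_prod[OF efin, symmetric] by simp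
  qed
qed

lemma bad_infinite:
  assumes "finite_rect D" and nz: "\<And>i. emeasure lborel (D i \<inter> Cs i) \<noteq> 0"
  shows "infinite {i. emeasure lborel (Cs i - D i) > 0}"
proof
  assume fin: "finite {i. emeasure lborel (Cs i - D i) > 0}"
  obtain v where hv: "has_vol D v" and vfin: "v < \<infinity>" and bor: "\<And>i. D i \<in> sets borel"
    using assms unfolding finite_rect_def by auto
  obtain N where N: "\<And>i. i \<in> {i. emeasure lborel (Cs i - D i) > 0} \<Longrightarrow> i < N"
    using fin finite_nat_set_iff_bounded by auto
  define d where "d i = emeasure lborel (D i)" for i
  have limd: "(\<lambda>n. \<Prod>i<n. d i) \<longlonglongrightarrow> v" using hv unfolding has_vol_def d_def .
  have ed: "emeasure lborel (D i \<inter> Cs i) \<le> d i" for i unfolding d_def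
    by (rule emeasure_mono) (use bor in auto)
  have dnz: "d i \<noteq> 0" for i using ed[of i] nz[of i] by (auto simp: le_zero_eq)
  have dfin: "d i < \<infinity>" for i by (rule fin_sides[OF limd vfin dnz])
  define dr where "dr i = enn2real (d i)" for i
  have drpos: "dr i > 0" for i unfolding dr_def using dnz[of i] dfin[of i]
    by (simp add: enn2real_positive_iff zero_less_iff_neq_zero)
  have dc: "dr i \<ge> cv i" if "i \<ge> N" for i
  proof -
    have "emeasure lborel (Cs i - D i) = 0"
    proof (rule ccontr)
      assume "emeasure lborel (Cs i - D i) \<noteq> 0"
      hence "i < N" using N[of i] by (simp add: zero_less_iff_neq_zero)
      thus False using that by simp
    qed
    hence null: "Cs i - D i \<in> null_sets lborel" using bor by (auto simp: null_sets_def)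
    have "emeasure lborel (Cs i - (Cs i - D i)) = emeasure lborel (Cs i)"
      by (rule emeasure_Diff_null_set[OF null]) simp
    moreover have "Cs i - (Cs i - D i) = D i \<inter> Cs i" by auto
    ultimately have "ennreal (cv i) \<le> d i" using ed[of i] Cs_meas[of i] by simp
    hence "enn2real (ennreal (cv i)) \<le> dr i" unfolding dr_def using dfin[of i]
      by (intro enn2real_mono) auto
    thus ?thesis using cv_pos[of i] by simp
  qed
  have gr: "dr i * dr (Suc i) \<ge> 2" if "i \<ge> N" for i
  proof -
    have "cv i * cv (Suc i) \<le> dr i * dr (Suc i)"
      using dc[of i] dc[of "Suc i"] that cv_pos[of i] cv_pos[of "Suc i"]
      by (intro mult_mono) (auto intro: less_imp_le)
    thus ?thesis using cv_prod[of i] by simp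
  qed
  have vv: "v = ennreal (enn2real v)" using vfin by simp
  have "(\<lambda>n. ennreal (\<Prod>i<n. dr i)) \<longlonglongrightarrow> ennreal (enn2real v)"
    using limd unfolding dr_def to_real_prod[OF dfin] by (subst vv[symmetric])
  hence limr: "(\<lambda>n. \<Prod>i<n. dr i) \<longlonglongrightarrow> enn2real v"
    by (subst (asm) tendsto_ennreal_iff) (auto simp: dr_def prod_nonneg)
  show False by (rule growth_contra[OF drpos limr gr])
qed



fun usedf :: "(nat \<Rightarrow> nat set) \<Rightarrow> nat \<Rightarrow> nat set" where
  "usedf B 0 = {}"
| "usedf B (Suc n) = insert (LEAST i. i \<in> B n \<and> i \<notin> usedf B n) (usedf B n)"

definition sel :: "(nat \<Rightarrow> nat set) \<Rightarrow> nat \<Rightarrow> nat" where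
  "sel B n = (LEAST i. i \<in> B n \<and> i \<notin> usedf B n)"

lemma usedf_finite: "finite (usedf B n)"
  by (induction n) auto

lemma sel_props:
  assumes "\<And>n. infinite (B n)"
  shows "sel B n \<in> B n" "sel B n \<notin> usedf B n"
proof -
  have "\<exists>i. i \<in> B n \<and> i \<notin> usedf B n"
  proof -
    have "infinite (B n - usedf B n)" using assms[of n] usedf_finite[of B n] by simp
    hence "B n - usedf B n \<noteq> {}" by (metis finite.emptyI)
    thus ?thesis by auto
  qed
  hence "sel B n \<in> B n \<and> sel B n \<notin> usedf B n"
    unfolding sel_def by (rule LeastI_ex)
  thus "sel B n \<in> B n" "sel B n \<notin> usedf B n" by auto
qed

lemma sel_used: "k < n \<Longrightarrow> sel B k \<in> usedf B n"
proof (induction n)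
  case 0 then show ?case by simp
next
  case (Suc n)
  then show ?case by (cases "k = n") (auto simp: sel_def)
qed

lemma sel_inj:
  assumes "\<And>n. infinite (B n)"
  shows "inj (sel B)"
proof (rule injI)
  have ns: "sel B m \<notin> usedf B m" for m by (rule sel_props(2)) (rule assms)
  fix k n assume eq: "sel B k = sel B n"
  show "k = n"
  proof (rule ccontr)
    assume "k \<noteq> n"
    hence "k < n \<or> n < k" by auto
    thus False
    proof
      assume "k < n" thus False using sel_used[OF \<open>k < n\<close>, of B] ns[of n] eq by simp
    next
      assume "n < k" thus False using sel_used[OF \<open>n < k\<close>, of B] ns[of k] eq by simp
    qed
  qed
qed

lemma rect_Cs_in_B_inf: "rect Cs \<in> B_inf"
proof -
  have eq: "rect Cs = (\<Inter>m. {x. \<forall>i<m. x i \<in> Cs i})" unfolding rect_def by auto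
  have "{x. \<forall>i<m. x i \<in> Cs i} \<in> cylinder_sets" for m
    unfolding cylinder_sets_def
    by (rule CollectI, rule exI[of _ m], rule exI[of _ Cs]) simp
  hence "{x. \<forall>i<m. x i \<in> Cs i} \<in> B_inf" for m unfolding B_inf_def by (rule sigma_sets.Basic)
  thus ?thesis unfolding eq B_inf_def by (intro sigma_sets_Inter) auto
qed

lemma no_cover:
  fixes \<C> :: "nat \<Rightarrow> nat \<Rightarrow> real set"
  assumes fr: "\<And>n. finite_rect (\<C> n)"
  shows "\<not> rect Cs \<subseteq> (\<Union>n. rect (\<C> n))"
proof
  assume cov: "rect Cs \<subseteq> (\<Union>n. rect (\<C> n))"
  have bor: "\<C> n i \<in> sets borel" for n i using fr[of n] unfolding finite_rect_def by auto
  define Z where "Z = {n. \<exists>i. emeasure lborel (\<C> n i \<inter> Cs i) = 0}"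
  define B where "B n = (if n \<in> Z then UNIV else {i. emeasure lborel (Cs i - \<C> n i) > 0})" for n :: nat
  have Binf: "infinite (B n)" for n
  proof (cases "n \<in> Z")
    case True thus ?thesis unfolding B_def by simp
  next
    case False
    hence "\<And>i. emeasure lborel (\<C> n i \<inter> Cs i) \<noteq> 0" unfolding Z_def by auto
    from bad_infinite[OF fr this] False show ?thesis unfolding B_def by simp
  qed
  have injS: "inj (sel B)" by (rule sel_inj) (rule Binf)
  define Nul where "Nul i = (\<Union>n\<in>{n. emeasure lborel (\<C> n i \<inter> Cs i) = 0}. \<C> n i \<inter> Cs i)" for i
  define Ex where "Ex i = (\<Union>n\<in>{n. n \<notin> Z \<and> sel B n = i}. \<C> n i)" for i
  define G where "G i = Cs i - Nul i - Ex i" for i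
  have Nnull: "Nul i \<in> null_sets lborel" for i
    unfolding Nul_def by (rule null_sets_UN') (use bor in \<open>auto simp: null_sets_def\<close>)
  have Exmeas: "Ex i \<in> sets lborel" for i
    unfolding Ex_def by (rule sets.countable_UN') (use bor in auto)
  have Gpos: "emeasure lborel (G i) > 0" for i
  proof (cases "\<exists>n. n \<notin> Z \<and> sel B n = i")
    case True
    then obtain n where n: "n \<notin> Z" "sel B n = i" by auto
    have "Ex i = \<C> n i"
    proof -
      have "{n'. n' \<notin> Z \<and> sel B n' = i} = {n}"
        using n injS by (auto dest: injD)
      thus ?thesis unfolding Ex_def by simp
    qed
    hence "G i = (Cs i - \<C> n i) - Nul i" unfolding G_def by auto
    hence "emeasure lborel (G i) = emeasure lborel (Cs i - \<C> n i)"
      using Nnull[of i] bor[of n i] by (simp add: emeasure_Diff_null_set)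
    moreover have "sel B n \<in> B n" by (rule sel_props(1)) (rule Binf)
    ultimately show ?thesis using n unfolding B_def by simp
  next
    case False
    hence "Ex i = {}" unfolding Ex_def by auto
    hence "G i = Cs i - Nul i" unfolding G_def by auto
    hence "emeasure lborel (G i) = emeasure lborel (Cs i)"
      using Nnull[of i] by (simp add: emeasure_Diff_null_set)
    thus ?thesis using Cs_meas[of i] cv_pos[of i] by simp
  qed
  have Gne: "G i \<noteq> {}" for i using Gpos[of i] by auto
  define x where "x i = (SOME y. y \<in> G i)" for i
  have xG: "x i \<in> G i" for i unfolding x_def using Gne[of i] by (simp add: some_in_eq)
  have "x \<in> rect Cs" using xG unfolding rect_def G_def by auto
  with cov obtain n where xn: "x \<in> rect (\<C> n)" by auto
  show False
  proof (cases "n \<in> Z")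
    case True
    then obtain i where i: "emeasure lborel (\<C> n i \<inter> Cs i) = 0" unfolding Z_def by auto
    have "x i \<in> \<C> n i" using xn unfolding rect_def by auto
    moreover have "x i \<in> Cs i" "x i \<notin> Nul i" using xG[of i] unfolding G_def by auto
    ultimately show False using i unfolding Nul_def by auto
  next
    case False
    define i where "i = sel B n"
    have "x i \<in> \<C> n i" using xn unfolding rect_def by auto
    moreover have "x i \<notin> Ex i" using xG[of i] unfolding G_def by auto
    ultimately show False using False unfolding Ex_def i_def by auto
  qed
qed

lemma mu_A: "mu (rect Cs) = \<infinity>"
proof -
  have S: "{(\<Sum>n. vol (\<C> n)) | \<C>. (\<forall>n. finite_rect (\<C> n)) \<and> rect Cs \<subseteq> (\<Union>n. rect (\<C> n))} = {}"
  proof (rule equals0I)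
    fix u assume "u \<in> {(\<Sum>n. vol (\<C> n)) | \<C>. (\<forall>n. finite_rect (\<C> n)) \<and> rect Cs \<subseteq> (\<Union>n. rect (\<C> n))}"
    then obtain \<C> :: "nat \<Rightarrow> nat \<Rightarrow> real set" where "\<forall>n. finite_rect (\<C> n)" "rect Cs \<subseteq> (\<Union>n. rect (\<C> n))"
      by (elim CollectE exE conjE) (rule that; assumption)
    with no_cover[of \<C>] show False by simp
  qed
  show ?thesis unfolding mu_def mu_star_def S Inf_empty by simp
qed

lemma mu_sub:
  assumes "B \<subseteq> rect Cs" "mu B < \<infinity>"
  shows "mu B = 0"
proof -
  let ?S = "{(\<Sum>n. vol (\<C> n)) | \<C>. (\<forall>n. finite_rect (\<C> n)) \<and> B \<subseteq> (\<Union>n. rect (\<C> n))}"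
  have "?S \<noteq> {}"
  proof
    assume "?S = {}"
    hence "mu B = \<infinity>" unfolding mu_def mu_star_def by (simp only:) simp
    with assms(2) show False by simp
  qed
  then obtain \<C> :: "nat \<Rightarrow> nat \<Rightarrow> real set" where fr: "\<And>n. finite_rect (\<C> n)" and cov: "B \<subseteq> (\<Union>n. rect (\<C> n))" by blast
  define \<D> where "\<D> n i = \<C> n i \<inter> Cs i" for n i :: nat
  have hv: "has_vol (\<D> n) 0" for n unfolding \<D>_def[abs_def] by (rule vol_zero_inter[OF fr])
  have frD: "finite_rect (\<D> n)" for n
    using fr[of n] hv[of n] unfolding finite_rect_def \<D>_def by auto
  have volD: "vol (\<D> n) = 0" for n
    using hv[of n] unfolding has_vol_def vol_def by (rule limI)
  have covD: "B \<subseteq> (\<Union>n. rect (\<D> n))"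
  proof
    fix y assume "y \<in> B"
    with cov obtain n where "y \<in> rect (\<C> n)" by auto
    moreover have "y \<in> rect Cs" using \<open>y \<in> B\<close> assms(1) by auto
    ultimately have "y \<in> rect (\<D> n)" unfolding rect_def \<D>_def by auto
    thus "y \<in> (\<Union>n. rect (\<D> n))" by auto
  qed
  have "0 \<in> ?S"
  proof -
    have "(\<Sum>n. vol (\<D> n)) = 0" using volD by simp
    show ?thesis
    proof (rule CollectI, rule exI[of _ \<D>], intro conjI allI)
      show "0 = (\<Sum>n. vol (\<D> n))" using \<open>(\<Sum>n. vol (\<D> n)) = 0\<close> by simp
      show "finite_rect (\<D> n)" for n by (rule frD)
      show "B \<subseteq> (\<Union>n. rect (\<D> n))" by (rule covD)
    qed
  qed
  hence "mu B \<le> 0" unfolding mu_def mu_star_def by (rule Inf_lower)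
  thus ?thesis by simp
qed

theorem propositionA3:
  shows "\<not> semifinite B_inf mu"
proof
  assume "semifinite B_inf mu"
  hence "\<exists>B\<in>B_inf. B \<subseteq> rect Cs \<and> 0 < mu B \<and> mu B < \<infinity>"
    using rect_Cs_in_B_inf mu_A unfolding semifinite_def by simp
  then obtain B where B: "B \<subseteq> rect Cs" "0 < mu B" "mu B < \<infinity>" by auto
  from mu_sub[OF B(1) B(3)] B(2) show False by simp
qed

end
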